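(* Let $A$ be a set of parameters of cardinality $n$ and let $N:A\times[0,1]\to A\times[0,1]$ be a fuzzy soft negation. Then $N$ has at most $n$ equilibrium points.
   Context: For pairs with the same first coordinate, $(a,x)\le(a,y)$ iff $x\le y$, and $(a,x)\ge(a,y)$ iff $x\ge y$. A fuzzy soft negation is a map $N:A\times[0,1]\to A\times[0,1]$ such that: (i) $N(a,1)=(a,0)$ and $N(a,0)=(a,1)$ for all $a\in A$; (ii) if $x\le y$ then $N(a,x)\ge N(a,y)$, for all $a\in A$, $x,y\in[0,1]$; (iii) $N(N(a,x))=(a,x)$ for all $a\in A$, $x\in[0,1]$. A point $(a,x)\in A\times[0,1]$ is an equilibrium point of $N$ if $N(a,x)=(a,x)$. *)

theory Defs
  imports Main "HOL.Real"
begin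

definition soft_le :: "'a \<times> real \<Rightarrow> 'a \<times> real \<Rightarrow> bool" where
  "soft_le p q \<longleftrightarrow> fst p = fst q \<and> snd p \<le> snd q"

definition fuzzy_soft_negation :: "'a set \<Rightarrow> ('a \<times> real \<Rightarrow> 'a \<times> real) \<Rightarrow> bool" where
  "fuzzy_soft_negation A N \<longleftrightarrow>
     (\<forall>a\<in>A. \<forall>x\<in>{0..1}. N (a, x) \<in> A \<times> {0..1}) \<and>
     (\<forall>a\<in>A. N (a, 1) = (a, 0) \<and> N (a, 0) = (a, 1)) \<and>
     (\<forall>a\<in>A. \<forall>x\<in>{0..1}. \<forall>y\<in>{0..1}. x \<le> y \<longrightarrow> soft_le (N (a, y)) (N (a, x))) \<and>
     (\<forall>a\<in>A. \<forall>x\<in>{0..1}. N (N (a, x)) = (a, x))"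

definition equilibrium_points :: "'a set \<Rightarrow> ('a \<times> real \<Rightarrow> 'a \<times> real) \<Rightarrow> ('a \<times> real) set" where
  "equilibrium_points A N = {p \<in> A \<times> {0..1}. N p = p}"

end

theory Submission
  imports Defs
begin

theorem theorem3p3:
  fixes A :: "'a set" and N :: "'a \<times> real \<Rightarrow> 'a \<times> real" and n :: nat
  assumes "finite A" and "card A = n"
    and "fuzzy_soft_negation A N"
  shows "finite (equilibrium_points A N) \<and> card (equilibrium_points A N) \<le> n"
proof -
  let ?E = "equilibrium_points A N"
  have mono: "\<And>a x y. a \<in> A \<Longrightarrow> x \<in> {0..1} \<Longrightarrow> y \<in> {0..1} \<Longrightarrow> x \<le> y
      \<Longrightarrow> soft_le (N (a, y)) (N (a, x))"
    using assms(3) unfolding fuzzy_soft_negation_def by blast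
  have uniq: "x = y" if "a \<in> A" "x \<in> {0..1}" "y \<in> {0..1}" "N (a,x) = (a,x)" "N (a,y) = (a,y)"
    for a x y
  proof (rule ccontr)
    assume "x \<noteq> y"
    then consider "x < y" | "y < x" by linarith
    then show False
    proof cases
      case 1
      then have "soft_le (N (a, y)) (N (a, x))" using 1 that by (intro mono) auto
      then show False using that 1 by (simp add: soft_le_def)
    next
      case 2
      then have "soft_le (N (a, x)) (N (a, y))" using 2 that by (intro mono) auto
      then show False using that 2 by (simp add: soft_le_def)
    qed
  qed
  have inj: "inj_on fst ?E"
    unfolding inj_on_def equilibrium_points_def
    using uniq by (auto simp: mem_Times_iff)
  have sub: "fst ` ?E \<subseteq> A" unfolding equilibrium_points_def by auto
  have fin: "finite ?E"
    using inj sub assms(1) finite_imageD finite_subset by blast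
  have "card ?E = card (fst ` ?E)" using inj by (simp add: card_image)
  also have "\<dots> \<le> card A" using sub assms(1) card_mono by blast
  finally show ?thesis using fin assms(2) by simp
qed

end
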